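(* For $\alpha=(\alpha_0,\alpha_1,\alpha_2)\in\mathbb N^3$ and $a,b>0$ with $a\ne b$, $$\mathfrak H_\alpha(a,b)=(-1)^{|\alpha|+1}[1^{\alpha_0+1},a^{\alpha_1+1},b^{\alpha_2+1}]\log=(-1)^{|\alpha|+1}[1^{\alpha_0},a^{\alpha_1+1},b^{\alpha_2+1}]\mathcal L_0=\frac{(-1)^{|\alpha|+\alpha_0+1}}{\alpha_1!\,\alpha_2!}\,\partial_a^{\alpha_1}\partial_b^{\alpha_2}\frac{\mathcal L_{\alpha_0}(b)-\mathcal L_{\alpha_0}(a)}{b-a}.$$ In particular $\mathfrak H_{(r,0,0)}(a,b)=-\frac{\mathcal L_r(b)-\mathcal L_r(a)}{b-a}$ for $r\in\mathbb N$.
   Context: $\mathfrak H_\alpha(a,b):=\int_0^\infty x^{|\alpha|+1}(1+x)^{-\alpha_0-1}(1+ax)^{-\alpha_1-1}(1+bx)^{-\alpha_2-1}\,dx$ for $a,b>0$, $|\alpha|=\alpha_0+\alpha_1+\alpha_2$. $\mathcal L_0(s)=\frac{\log s}{s-1}$ and for $r\in\mathbb N$, $\mathcal L_r(s):=(-1)^r[1^{r+1},s]\log$ (the "modified logarithm"). Divided differences: for $f$ smooth on an open interval, $[y_0]f=f(y_0)$, $[y_0,\dots,y_n]f=\int_{\{t\ge0,\sum t_j=1\}}f^{(n)}(\sum t_jy_j)\,dt_1\cdots dt_n$, defined also for repeated arguments; $[1^k,a^l,b^q]f$ denotes the divided difference with $k$ arguments $1$, $l$ arguments $a$, $q$ arguments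 $b$. *)

theory Defs
  imports "HOL-Analysis.Analysis"
begin

text \<open>Divided difference of f with argument list ys = [y_0, ..., y_n], defined
  (as in the paper) by the Hermite-Genocchi integral over the standard simplex
  {t_1,...,t_n >= 0, t_1+...+t_n <= 1}, with t_0 = 1 - (t_1+...+t_n).\<close>
definition divdiff :: "real list \<Rightarrow> (real \<Rightarrow> real) \<Rightarrow> real" where
  "divdiff ys f =
     (let n = length ys - 1 in
      \<integral>t. (if (\<forall>j\<in>{1..n}. 0 \<le> t j) \<and> (\<Sum>j=1..n. t j) \<le> 1
            then (deriv ^^ n) f ((1 - (\<Sum>j=1..n. t j)) * ys ! 0 + (\<Sum>j=1..n. t j * ys ! j))
            else 0)
        \<partial>(PiM {1..n} (\<lambda>_. lborel)))"

definition dd3 :: "nat \<Rightarrow> real \<Rightarrow> nat \<Rightarrow> real \<Rightarrow> nat \<Rightarrow> (real \<Rightarrow> real) \<Rightarrow> real" where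
  "dd3 k a l b q f = divdiff (replicate k 1 @ replicate l a @ replicate q b) f"

text \<open>L_0(s) = log s / (s - 1), extended by its limit value 1 at s = 1.\<close>
definition L0 :: "real \<Rightarrow> real" where
  "L0 s = (if s = 1 then 1 else ln s / (s - 1))"

definition Lmod :: "nat \<Rightarrow> real \<Rightarrow> real" where
  "Lmod r s = (if r = 0 then L0 s else (-1) ^ r * divdiff (replicate (r + 1) 1 @ [s]) ln)"

definition frakH :: "nat \<Rightarrow> nat \<Rightarrow> nat \<Rightarrow> real \<Rightarrow> real \<Rightarrow> real" where
  "frakH a0 a1 a2 a b =
     (LBINT x:{0<..}. x ^ (a0 + a1 + a2 + 1) /
        ((1 + x) ^ (a0 + 1) * (1 + a * x) ^ (a1 + 1) * (1 + b * x) ^ (a2 + 1)))"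

end

theory Submission
  imports Defs "HOL-Real_Asymp.Real_Asymp"
begin

definition Psi1 :: "(real \<Rightarrow> real) \<Rightarrow> nat \<Rightarrow> real \<Rightarrow> real" where
  "Psi1 c q s = integral {0..1} (\<lambda>t. c t / (1 - t + t * s) ^ q)"

lemma lin_pos: "0 \<le> t \<Longrightarrow> t \<le> 1 \<Longrightarrow> 0 < s \<Longrightarrow> 0 < 1 - t + t * (s::real)"
proof (cases "t = 1")
  case False
  assume "0 \<le> t" "t \<le> 1" "0 < s"
  then have "t < 1" "0 \<le> t * s" using False by auto
  then show ?thesis by linarith
qed auto


lemma deriv_div_pow:
  fixes D :: "real \<Rightarrow> real"
  assumes "(D has_field_derivative d) (at x within U)" "D x \<noteq> 0"
  shows "((\<lambda>x. c / D x ^ q) has_field_derivative (- real q * (d * c / D x ^ Suc q))) (at x within U)"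
proof -
  have "((\<lambda>x. c / D x ^ q) has_field_derivative
     (- (c * (real q * D x ^ (q - 1) * d)) / (D x ^ q * D x ^ q))) (at x within U)"
    using assms by (auto intro!: derivative_eq_intros)
  moreover have "- (c * (real q * D x ^ (q - 1) * d)) / (D x ^ q * D x ^ q) = - real q * (d * c / D x ^ Suc q)"
  proof (cases q)
    case (Suc m)
    show ?thesis unfolding Suc using assms(2) by (simp add: field_simps)
  qed simp
  ultimately show ?thesis by simp
qed

lemma Psi1_integrable:
  fixes x :: real
  assumes c: "continuous_on {0..1} c" and x: "0 < x"
  shows "(\<lambda>t. c t / (1 - t + t * x) ^ q) integrable_on {0..1}"
proof -
  have nz: "\<forall>t\<in>{0..1}. (1 - t + t * x) ^ q \<noteq> 0"
  proof
    fix t :: real assume "t \<in> {0..1}"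
    then have "0 < 1 - t + t * x" using x by (intro lin_pos) auto
    then show "(1 - t + t * x) ^ q \<noteq> 0" by simp
  qed
  show ?thesis
    by (rule integrable_continuous_real) (intro continuous_intros c nz)
qed

lemma Psi1_deriv:
  fixes s :: real
  assumes c: "continuous_on {0..1} c" and s: "0 < s"
  shows "(Psi1 c q has_field_derivative (- real q * Psi1 (\<lambda>t. t * c t) (Suc q) s)) (at s)"
proof -
  define fx where "fx = (\<lambda>x t. - real q * ((t * c t) / (1 - t + t * x) ^ (Suc q)))"
  have cs: "continuous_on ({0<..} \<times> {0..1}) (\<lambda>p::real\<times>real. c (snd p))"
    by (rule continuous_on_compose2[OF c continuous_on_snd]) auto
  have "((\<lambda>x. integral (cbox 0 1) (\<lambda>t. c t / (1 - t + t * x) ^ q)) has_field_derivative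
          integral (cbox 0 1) (fx s)) (at s within {0<..})"
  proof (rule leibniz_rule_field_derivative)
    fix x t :: real assume x: "x \<in> {0<..}" and t: "t \<in> cbox 0 1"
    have p: "0 < 1 - t + t * x" using x t lin_pos by auto
    have dD: "((\<lambda>x. 1 - t + t * x) has_field_derivative t) (at x within {0<..})"
      by (rule derivative_eq_intros refl | simp)+
    show "((\<lambda>x. c t / (1 - t + t * x) ^ q) has_field_derivative fx x t) (at x within {0<..})"
      using deriv_div_pow[OF dD, of "c t" q] p unfolding fx_def by simp
  next
    fix x :: real assume x: "x \<in> {0<..}"
    show "(\<lambda>t. c t / (1 - t + t * x) ^ q) integrable_on cbox 0 1"
      unfolding cbox_interval using Psi1_integrable[OF c] x by simp
  next
    show "continuous_on ({0<..} \<times> cbox 0 1) (\<lambda>(x, t). fx x t)"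
    proof -
      have nz: "\<forall>p\<in>{(0::real)<..} \<times> {(0::real)..1}. (1 - snd p + snd p * fst p) ^ Suc q \<noteq> 0"
      proof
        fix p :: "real \<times> real" assume "p \<in> {0<..} \<times> {0..1}"
        then have "0 < 1 - snd p + snd p * fst p" by (intro lin_pos) auto
        then show "(1 - snd p + snd p * fst p) ^ Suc q \<noteq> 0" by simp
      qed
      show ?thesis unfolding cbox_interval fx_def case_prod_beta by (intro continuous_intros cs nz)
    qed
  qed (use s in \<open>simp_all add: convex_real_interval\<close>)
  then have d: "((\<lambda>x. integral (cbox 0 1) (\<lambda>t. c t / (1 - t + t * x) ^ q)) has_field_derivative
          integral (cbox 0 1) (fx s)) (at s)"
    using s at_within_open[of s "{0<..}"] by simp
  have ieq: "integral (cbox 0 1) (fx s) = - real q * Psi1 (\<lambda>t. t * c t) (Suc q) s"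
    unfolding fx_def Psi1_def cbox_interval by (simp only: integral_mult_right)
  have eqP: "Psi1 c q = (\<lambda>x. integral (cbox 0 1) (\<lambda>t. c t / (1 - t + t * x) ^ q))"
    by (rule ext) (simp only: Psi1_def cbox_interval)
  show ?thesis using d unfolding ieq eqP[symmetric] .
qed

lemma deriv_funpow_local:
  assumes U: "open U" and fg: "\<And>x. x \<in> U \<Longrightarrow> f x = g x" and x: "x \<in> U"
  shows "(deriv ^^ k) f x = (deriv ^^ k) g x"
  using x
proof (induction k arbitrary: x)
  case 0 then show ?case using fg by simp
next
  case (Suc k)
  have ev: "eventually (\<lambda>y. y \<in> U) (nhds x)"
    using U Suc.prems by (rule eventually_nhds_in_open)
  have "eventually (\<lambda>y. (deriv ^^ k) f y = (deriv ^^ k) g y) (nhds x)"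
    by (rule eventually_mono[OF ev]) (rule Suc.IH)
  then have "deriv ((deriv ^^ k) f) x = deriv ((deriv ^^ k) g) x"
    by (rule deriv_cong_ev) simp
  then show ?case by simp
qed

lemma Psi1_funpow:
  fixes s :: real
  shows "continuous_on {0..1} c \<Longrightarrow> 0 < s \<Longrightarrow>
   (deriv ^^ k) (Psi1 c q) s = (-1) ^ k * pochhammer (real q) k * Psi1 (\<lambda>t. t ^ k * c t) (q + k) s"
proof (induction k arbitrary: s)
  case 0 then show ?case by simp
next
  case (Suc k)
  define C where "C = (-1) ^ k * pochhammer (real q) k"
  define c' where "c' = (\<lambda>t::real. t ^ k * c t)"
  have c': "continuous_on {0..1} c'" unfolding c'_def by (intro continuous_intros Suc.prems)
  have "(deriv ^^ Suc k) (Psi1 c q) s = deriv ((deriv ^^ k) (Psi1 c q)) s" by simp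
  also have "\<dots> = deriv (\<lambda>y. C * Psi1 c' (q + k) y) s"
  proof (rule deriv_cong_ev)
    have ev: "eventually (\<lambda>y. y \<in> {0<..}) (nhds s)"
      using Suc.prems by (intro eventually_nhds_in_open) auto
    show "eventually (\<lambda>y. (deriv ^^ k) (Psi1 c q) y = C * Psi1 c' (q + k) y) (nhds s)"
      by (rule eventually_mono[OF ev]) (use Suc.IH Suc.prems in \<open>simp add: C_def c'_def\<close>)
  qed simp
  also have "\<dots> = C * (- real (q + k) * Psi1 (\<lambda>t. t * c' t) (Suc (q + k)) s)"
    by (intro DERIV_imp_deriv DERIV_cmult Psi1_deriv c' Suc.prems)
  also have "\<dots> = (-1) ^ Suc k * pochhammer (real q) (Suc k) * Psi1 (\<lambda>t. t ^ Suc k * c t) (q + Suc k) s"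
    by (simp add: C_def c'_def pochhammer_Suc algebra_simps)
  finally show ?case .
qed

lemma Psi1_funpow_local:
  assumes "open U" "U \<subseteq> {0<..}" "\<And>y. y \<in> U \<Longrightarrow> f y = Psi1 c q y" "x \<in> U"
    "continuous_on {0..1} c"
  shows "(deriv ^^ k) f x = (-1) ^ k * pochhammer (real q) k * Psi1 (\<lambda>t. t ^ k * c t) (q + k) x"
  using deriv_funpow_local[of U f "Psi1 c q" x k] Psi1_funpow[of c x k q] assms by auto


definition SX :: "nat set \<Rightarrow> (nat \<Rightarrow> real) \<Rightarrow> bool" where
  "SX J t \<longleftrightarrow> (\<forall>j\<in>J. 0 \<le> t j) \<and> (\<Sum>j\<in>J. t j) \<le> 1"

definition LZ :: "nat set \<Rightarrow> (nat \<Rightarrow> real) \<Rightarrow> (nat \<Rightarrow> real) \<Rightarrow> real" where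
  "LZ J z t = (1 - (\<Sum>j\<in>J. t j)) * z 0 + (\<Sum>j\<in>J. t j * z j)"

abbreviation PM :: "nat set \<Rightarrow> (nat \<Rightarrow> real) measure" where
  "PM J \<equiv> PiM J (\<lambda>_. lborel)"

lemma SX_sets: "finite J \<Longrightarrow> {t \<in> space (PM J). SX J t} \<in> sets (PM J)"
proof -
  assume J: "finite J"
  have "{t \<in> space (PM J). SX J t} =
     Pi\<^sub>E J (\<lambda>_. {0..}) \<inter> (\<lambda>x. sum x J) -` {..1} \<inter> space (PM J)"
    by (auto simp: SX_def space_PiM)
  also have "\<dots> \<in> sets (PM J)" using J by measurable
  finally show ?thesis .
qed

lemma SX_pred[measurable]: "finite J \<Longrightarrow> Measurable.pred (PM J) (SX J)"
  using SX_sets[of J] by (simp add: pred_def)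

lemma LZ_meas[measurable]: "finite J \<Longrightarrow> LZ J z \<in> borel_measurable (PM J)"
  unfolding LZ_def by measurable

lemma SX_le1: "SX J t \<Longrightarrow> finite J \<Longrightarrow> j \<in> J \<Longrightarrow> t j \<le> 1"
  unfolding SX_def using member_le_sum[of j J t] by auto

lemma LZ_ge:
  assumes "SX J t" "finite J" "\<And>j. j \<in> insert 0 J \<Longrightarrow> \<mu> \<le> z j"
  shows "\<mu> \<le> LZ J z t"
proof -
  have s: "(\<Sum>j\<in>J. t j) \<le> 1" "\<forall>j\<in>J. 0 \<le> t j" using assms(1) unfolding SX_def by auto
  have "(1 - (\<Sum>j\<in>J. t j)) * \<mu> \<le> (1 - (\<Sum>j\<in>J. t j)) * z 0"
    using s assms(3)[of 0] by (intro mult_left_mono) auto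
  moreover have "(\<Sum>j\<in>J. t j * \<mu>) \<le> (\<Sum>j\<in>J. t j * z j)"
    using s assms(3) by (intro sum_mono mult_left_mono) auto
  moreover have "(\<Sum>j\<in>J. t j * \<mu>) = (\<Sum>j\<in>J. t j) * \<mu>"
    by (rule sum_distrib_right[symmetric])
  then have "(1 - (\<Sum>j\<in>J. t j)) * \<mu> + (\<Sum>j\<in>J. t j * \<mu>) = \<mu>"
    by (simp add: algebra_simps)
  ultimately show ?thesis unfolding LZ_def by linarith
qed

lemma SX_integrable:
  fixes f :: "(nat \<Rightarrow> real) \<Rightarrow> real"
  assumes J: "finite J" and f[measurable]: "f \<in> borel_measurable (PM J)"
    and B: "\<And>t. SX J t \<Longrightarrow> \<bar>f t\<bar> \<le> B"
  shows "integrable (PM J) (\<lambda>t. if SX J t then f t else 0)"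
proof -
  interpret product_sigma_finite "\<lambda>_. lborel :: real measure" by standard
  have "SX J (\<lambda>_. 0)" by (simp add: SX_def)
  then have "\<bar>f (\<lambda>_. 0)\<bar> \<le> B" by (rule B)
  then have B0: "0 \<le> B" by (rule order_trans[OF abs_ge_zero])
  show ?thesis
  proof (rule integrableI_bounded_set[where A = "Pi\<^sub>E J (\<lambda>_. {0..1})" and B = B])
    show "Pi\<^sub>E J (\<lambda>_. {0..1}) \<in> sets (PM J)" using J by measurable
    show "(\<lambda>t. if SX J t then f t else 0) \<in> borel_measurable (PM J)"
      using J by measurable
    have "emeasure (PM J) (Pi\<^sub>E J (\<lambda>_. {0..1})) = (\<Prod>i\<in>J. emeasure lborel {0..1::real})"
      using J by (intro emeasure_PiM) auto
    then show "emeasure (PM J) (Pi\<^sub>E J (\<lambda>_. {0..1})) < \<infinity>" by simp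
    show "AE x in PM J. x \<in> Pi\<^sub>E J (\<lambda>_. {0..1}) \<longrightarrow> norm (if SX J x then f x else 0) \<le> B"
      using B B0 by (intro AE_I2) auto
    show "AE x in PM J. x \<notin> Pi\<^sub>E J (\<lambda>_. {0..1}) \<longrightarrow> (if SX J x then f x else 0) = 0"
    proof (intro AE_I2 impI)
      fix x assume x: "x \<in> space (PM J)" "x \<notin> Pi\<^sub>E J (\<lambda>_. {0..1})"
      have "\<not> SX J x"
      proof
        assume S: "SX J x"
        then have "\<forall>j\<in>J. x j \<in> {0..1}" using SX_le1[OF S J] by (auto simp: SX_def)
        then show False using x by (auto simp: space_PiM PiE_iff)
      qed
      then show "(if SX J x then f x else 0) = 0" by simp
    qed
  qed
qed

lemma SX_insert:
  assumes "finite J" "i \<notin> J"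
  shows "SX (insert i J) (t(i := y)) \<longleftrightarrow> SX J t \<and> y \<in> {0..1 - (\<Sum>j\<in>J. t j)}"
proof -
  have s: "(\<Sum>j\<in>insert i J. (t(i := y)) j) = y + (\<Sum>j\<in>J. t j)"
    using assms by (simp add: sum.insert_if) (intro sum.cong, auto)
  show ?thesis
    unfolding SX_def s using assms sum_nonneg[of J t] by auto
qed

lemma sum_upd: "finite J \<Longrightarrow> i \<notin> J \<Longrightarrow> (\<Sum>j\<in>J. (t(i := y)) j * z j) = (\<Sum>j\<in>J. t j * z j)"
  by (intro sum.cong) auto

lemma PM_empty_integral: "(\<integral>t. f t \<partial>PM {}) = f (\<lambda>_. undefined)"
  by (simp add: PiM_empty lebesgue_integral_count_space_finite)

lemma SX_vol:
  "finite J \<Longrightarrow> (\<integral>t. (if SX J t then (1 - (\<Sum>j\<in>J. t j)) ^ k else 0) \<partial>PM J) = fact k / fact (card J + k)"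
proof (induction J arbitrary: k rule: finite_induct)
  case empty
  then show ?case by (subst PM_empty_integral) (simp add: SX_def)
next
  case (insert i J k)
  interpret product_sigma_finite "\<lambda>_. lborel :: real measure" by standard
  let ?F = "\<lambda>J k t. (if SX J t then (1 - (\<Sum>j\<in>J. t j)) ^ k else 0)"
  have int: "integrable (PM (insert i J)) (?F (insert i J) k)"
  proof (rule SX_integrable[where B = 1])
    fix t assume S: "SX (insert i J) t"
    then have "0 \<le> 1 - (\<Sum>j\<in>insert i J. t j)" "1 - (\<Sum>j\<in>insert i J. t j) \<le> 1"
      using sum_nonneg[of "insert i J" t] by (auto simp: SX_def)
    then show "\<bar>(1 - (\<Sum>j\<in>insert i J. t j)) ^ k\<bar> \<le> 1"
      by (simp add: power_le_one)
  qed (use insert in auto)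
  have "(\<integral>t. ?F (insert i J) k t \<partial>PM (insert i J)) = (\<integral>t. (\<integral>y. ?F (insert i J) k (t(i := y)) \<partial>lborel) \<partial>PM J)"
    by (rule product_integral_insert[OF insert(1,2) int])
  also have "\<dots> = (\<integral>t. (1 / real (Suc k)) * ?F J (Suc k) t \<partial>PM J)"
  proof (rule Bochner_Integration.integral_cong[OF refl])
    fix t :: "nat \<Rightarrow> real" assume "t \<in> space (PM J)"
    define s where "s = (\<Sum>j\<in>J. t j)"
    have sins: "(\<Sum>j\<in>insert i J. (t(i := y)) j) = y + s" for y
      using insert(1,2) unfolding s_def by (simp add: sum.insert_if) (intro sum.cong, auto)
    have eq: "?F (insert i J) k (t(i := y)) = (if SX J t then (1 - s - y) ^ k * indicator {0..1 - s} y else 0)" for y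
      unfolding SX_insert[OF insert(1,2)] sins s_def[symmetric] by (auto simp: indicator_def algebra_simps)
    show "(\<integral>y. ?F (insert i J) k (t(i := y)) \<partial>lborel) = (1 / real (Suc k)) * ?F J (Suc k) t"
    proof (cases "SX J t")
      case True
      then have s1: "0 \<le> 1 - s" unfolding SX_def s_def by auto
      define G where "G = (\<lambda>y. - ((1 - s - y) ^ Suc k / real (Suc k)))"
      have "(\<integral>y. (1 - s - y) ^ k * indicator {0..1 - s} y \<partial>lborel) = G (1 - s) - G 0"
      proof (rule integral_FTC_Icc_real[OF s1])
        fix y show "(G has_real_derivative (1 - s - y) ^ k) (at y)"
          unfolding G_def by (rule derivative_eq_intros refl | simp)+
      qed simp
      also have "G (1 - s) - G 0 = (1 - s) ^ Suc k / real (Suc k)" unfolding G_def by simp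
      finally have "(\<integral>y. (1 - s - y) ^ k * indicator {0..1 - s} y \<partial>lborel) = (1 - s) ^ Suc k / real (Suc k)" .
      then show ?thesis unfolding eq using True by (simp add: s_def)
    qed (simp add: eq)
  qed
  also have "\<dots> = (1 / real (Suc k)) * (fact (Suc k) / fact (card J + Suc k))"
    by (simp only: integral_mult_right_zero insert.IH)
  also have "\<dots> = fact k / fact (card J + Suc k)"
  proof -
    have aux: "a \<noteq> 0 \<Longrightarrow> (1/a) * ((a*b)/c) = b/(c::real)" for a b c by simp
    show ?thesis unfolding fact_Suc[of k] by (rule aux) simp
  qed
  also have "card J + Suc k = card (insert i J) + k"
    using insert(1,2) by simp
  finally show ?case .
qed


lemma LZ_insert_upd:
  assumes "finite J" "i \<notin> J" "i \<noteq> 0"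
  shows "LZ (insert i J) z (t(i := y)) = LZ J z t + y * (z i - z 0)"
proof -
  have "(\<Sum>j\<in>insert i J. (t(i := y)) j) = y + (\<Sum>j\<in>J. t j)"
    using assms by (simp add: sum.insert_if) (intro sum.cong, auto)
  moreover have "(\<Sum>j\<in>insert i J. (t(i := y)) j * z j) = y * z i + (\<Sum>j\<in>J. t j * z j)"
    using assms by (simp add: sum.insert_if) (intro sum.cong, auto)
  ultimately show ?thesis unfolding LZ_def by (simp add: algebra_simps)
qed

lemma LZ_shift:
  assumes "0 \<notin> J"
  shows "LZ J z t + (1 - (\<Sum>j\<in>J. t j)) * (z i - z 0) = LZ J (z(0 := z i)) t"
proof -
  have "(\<Sum>j\<in>J. t j * (z(0 := z i)) j) = (\<Sum>j\<in>J. t j * z j)"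
    using assms by (intro sum.cong) auto
  then show ?thesis unfolding LZ_def by (simp add: algebra_simps)
qed

lemma recip_bound:
  assumes "0 < \<mu>" "\<mu> \<le> L"
  shows "\<bar>(c::real) / L ^ m\<bar> \<le> \<bar>c\<bar> / \<mu> ^ m"
proof -
  have "\<mu> ^ m \<le> L ^ m" using assms by (intro power_mono) auto
  moreover have "0 < \<mu> ^ m" using assms by simp
  ultimately show ?thesis using assms
    by (simp add: abs_divide abs_mult frac_le power_abs)
qed

lemma SX_recip_integrable:
  assumes J: "finite J" and z: "\<And>j. j \<in> insert 0 J \<Longrightarrow> 0 < z j"
  shows "integrable (PM J) (\<lambda>t. if SX J t then c / LZ J z t ^ m else 0)"
proof -
  define \<mu> where "\<mu> = Min (z ` insert 0 J)"
  have \<mu>: "0 < \<mu>" "\<And>j. j \<in> insert 0 J \<Longrightarrow> \<mu> \<le> z j"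
    using J z unfolding \<mu>_def by auto
  show ?thesis
  proof (rule SX_integrable[where B = "\<bar>c\<bar> / \<mu> ^ m"])
    show "(\<lambda>t. c / LZ J z t ^ m) \<in> borel_measurable (PM J)" using J by measurable
    fix t assume "SX J t"
    then have "\<mu> \<le> LZ J z t" by (rule LZ_ge) (use J \<mu> in auto)
    then show "\<bar>c / LZ J z t ^ m\<bar> \<le> \<bar>c\<bar> / \<mu> ^ m" by (rule recip_bound[OF \<mu>(1)])
  qed (use J in auto)
qed

lemma SX_recip_aux:
  "card J = n \<Longrightarrow> finite J \<Longrightarrow> 0 \<notin> J \<Longrightarrow> (\<And>j. j \<in> insert 0 J \<Longrightarrow> 0 < z j) \<Longrightarrow>
   (\<integral>t. (if SX J t then fact n / LZ J z t ^ Suc n else 0) \<partial>PM J) = 1 / (\<Prod>j\<in>insert 0 J. z j)"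
proof (induction n arbitrary: J z)
  case 0
  then have J0: "J = {}" by simp
  show ?case unfolding J0 by (subst PM_empty_integral) (simp add: SX_def LZ_def)
next
  case (Suc n J z)
  note J = Suc.prems(2) and J0 = Suc.prems(3) and zpos = Suc.prems(4)
  define \<mu> where "\<mu> = Min (z ` insert 0 J)"
  have \<mu>: "0 < \<mu>" "\<And>j. j \<in> insert 0 J \<Longrightarrow> \<mu> \<le> z j"
    using J zpos unfolding \<mu>_def by auto
  show ?case
  proof (cases "\<exists>i\<in>J. z i \<noteq> z 0")
    case True
    then obtain i where i: "i \<in> J" "z i \<noteq> z 0" by blast
    define J' where "J' = J - {i}"
    have J': "J = insert i J'" "i \<notin> J'" "finite J'" "card J' = n" "0 \<notin> J'"
      using i J J0 Suc.prems(1) unfolding J'_def by (auto simp: card_Diff_singleton)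
    have i0: "i \<noteq> 0" using i(1) J0 by metis
    define d where "d = z i - z 0"
    have d: "d \<noteq> 0" using i unfolding d_def by simp
    define z' where "z' = z(0 := z i)"
    have zpos': "\<And>j. j \<in> insert 0 J' \<Longrightarrow> 0 < z' j" using zpos J' i unfolding z'_def by auto
    have zposJ': "\<And>j. j \<in> insert 0 J' \<Longrightarrow> 0 < z j" using zpos J' by auto
    interpret product_sigma_finite "\<lambda>_. lborel :: real measure" by standard
    let ?F = "\<lambda>t. if SX (insert i J') t then fact (Suc n) / LZ (insert i J') z t ^ Suc (Suc n) else 0"
    let ?F1 = "\<lambda>t. if SX J' t then fact n / LZ J' z t ^ Suc n else 0"
    let ?F2 = "\<lambda>t. if SX J' t then fact n / LZ J' z' t ^ Suc n else 0"
    have int: "integrable (PM (insert i J')) ?F"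
      by (rule SX_recip_integrable) (use J' zpos in auto)
    have int1: "integrable (PM J') ?F1" by (rule SX_recip_integrable) (use J' zposJ' in auto)
    have int2: "integrable (PM J') ?F2" by (rule SX_recip_integrable) (use J' zpos' in auto)
    have "(\<integral>t. ?F t \<partial>PM (insert i J')) = (\<integral>t. (\<integral>y. ?F (t(i := y)) \<partial>lborel) \<partial>PM J')"
      by (rule product_integral_insert[OF J'(3,2) int])
    also have "\<dots> = (\<integral>t. (1 / d) * (?F1 t - ?F2 t) \<partial>PM J')"
    proof (rule Bochner_Integration.integral_cong[OF refl])
      fix t :: "nat \<Rightarrow> real" assume "t \<in> space (PM J')"
      define s where "s = (\<Sum>j\<in>J'. t j)"
      define A where "A = LZ J' z t"
      have LZu: "LZ (insert i J') z (t(i := y)) = A + y * d" for y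
        unfolding A_def d_def by (rule LZ_insert_upd[OF J'(3,2) i0])
      have eq: "?F (t(i := y)) = (if SX J' t then fact (Suc n) / (A + y * d) ^ Suc (Suc n) * indicator {0..1 - s} y else 0)" for y
        unfolding SX_insert[OF J'(3,2)] LZu s_def[symmetric] by (auto simp: indicator_def)
      show "(\<integral>y. ?F (t(i := y)) \<partial>lborel) = (1 / d) * (?F1 t - ?F2 t)"
      proof (cases "SX J' t")
        case True
        then have s1: "0 \<le> 1 - s" unfolding SX_def s_def by auto
        have Apos: "0 < A + y * d" if "y \<in> {0..1 - s}" for y
        proof -
          have "SX (insert i J') (t(i := y))" unfolding SX_insert[OF J'(3,2)] using True that s_def by auto
          then have "\<mu> \<le> LZ (insert i J') z (t(i := y))"
            by (rule LZ_ge) (use J' \<mu> in auto)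
          then show ?thesis unfolding LZu using \<mu> by simp
        qed
        define G where "G = (\<lambda>y. (- (fact n / d)) / (A + y * d) ^ Suc n)"
        have "(\<integral>y. fact (Suc n) / (A + y * d) ^ Suc (Suc n) * indicator {0..1 - s} y \<partial>lborel) = G (1 - s) - G 0"
        proof (rule integral_FTC_Icc_real[OF s1])
          fix y :: real assume y: "0 \<le> y" "y \<le> 1 - s"
          have p: "0 < A + y * d" using Apos y by auto
          have dD: "((\<lambda>y. A + y * d) has_real_derivative d) (at y)"
            by (rule derivative_eq_intros refl | simp)+
          have "(G has_real_derivative - real (Suc n) * (d * (- (fact n / d)) / (A + y * d) ^ Suc (Suc n))) (at y)"
            unfolding G_def by (rule deriv_div_pow[OF dD]) (use p in simp)
          moreover have "- real (Suc n) * (d * (- (fact n / d)) / D) = fact (Suc n) / D" for D :: real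
          proof -
            have h: "d * (- (fact n / d)) = - fact n" using d by simp
            have aux: "- a * (- b / D) = a * b / D" for a b :: real
              by (cases "D = 0") (simp_all add: field_simps)
            show ?thesis unfolding h aux fact_Suc[of n] by (rule refl)
          qed
          ultimately show "(G has_real_derivative fact (Suc n) / (A + y * d) ^ Suc (Suc n)) (at y)" by simp
          show "isCont (\<lambda>y. fact (Suc n) / (A + y * d) ^ Suc (Suc n)) y"
            using p by (intro continuous_intros) auto
        qed
        also have "G (1 - s) - G 0 = (1 / d) * (fact n / A ^ Suc n - fact n / LZ J' z' t ^ Suc n)"
        proof -
          have hB: "A + (1 - s) * d = LZ J' z' t"
            unfolding A_def s_def d_def z'_def using LZ_shift[OF J'(5), of z t i] by (simp add: algebra_simps)
          have pA: "0 < A" using Apos[of 0] s1 by simp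
          have pB: "0 < LZ J' z' t" using Apos[of "1 - s"] s1 hB by simp
          have g1: "G (1 - s) = (- (fact n / d)) / LZ J' z' t ^ Suc n" unfolding G_def hB ..
          have g0: "G 0 = (- (fact n / d)) / A ^ Suc n" unfolding G_def by simp
          have aux: "a \<noteq> 0 \<Longrightarrow> b \<noteq> 0 \<Longrightarrow> (- (f / d)) / b - (- (f / d)) / a = (1 / d) * (f / a - f / b)" for a b f :: real
            using d by (simp add: field_simps)
          show ?thesis unfolding g1 g0 by (rule aux) (use pA pB in simp_all)
        qed
        finally show ?thesis unfolding eq using True by (simp add: A_def)
      qed (simp add: eq)
    qed
    also have "\<dots> = (1 / d) * ((\<integral>t. ?F1 t \<partial>PM J') - (\<integral>t. ?F2 t \<partial>PM J'))"
      using int1 int2 by simp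
    also have "\<dots> = (1 / d) * (1 / (\<Prod>j\<in>insert 0 J'. z j) - 1 / (\<Prod>j\<in>insert 0 J'. z' j))"
      using Suc.IH[OF J'(4,3,5) zposJ'] Suc.IH[OF J'(4,3,5) zpos'] by simp
    also have "\<dots> = 1 / (\<Prod>j\<in>insert 0 J. z j)"
    proof -
      define P where "P = (\<Prod>j\<in>J'. z j)"
      have P': "(\<Prod>j\<in>J'. z' j) = P" unfolding P_def z'_def using J'(5) by (intro prod.cong) auto
      have e1: "(\<Prod>j\<in>insert 0 J'. z j) = z 0 * P" unfolding P_def using J' by simp
      have e2: "(\<Prod>j\<in>insert 0 J'. z' j) = z i * P" using J' P' by (simp add: z'_def)
      have e3: "(\<Prod>j\<in>insert 0 J. z j) = z 0 * (z i * P)" unfolding P_def using J' J0 J by simp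
      have "0 < z 0" "0 < z i" using zpos i(1) by auto
      then have "z 0 \<noteq> 0" "z i \<noteq> 0" by auto
      moreover have "0 < P" unfolding P_def using zposJ' by (intro prod_pos) auto
      then have "P \<noteq> 0" by simp
      ultimately show ?thesis unfolding e1 e2 e3 d_def using d unfolding d_def by (simp add: field_simps)
    qed
    finally have X: "(\<integral>t. ?F t \<partial>PM (insert i J')) = 1 / (\<Prod>j\<in>insert 0 J. z j)" .
    show ?thesis using X by (simp only: J'(1)[symmetric])
  next
    case False
    then have zc: "\<And>j. j \<in> J \<Longrightarrow> z j = z 0" by auto
    have LZc: "LZ J z t = z 0" for t
    proof -
      have "(\<Sum>j\<in>J. t j * z j) = (\<Sum>j\<in>J. t j) * z 0"
        by (simp add: sum_distrib_right zc)
      then show ?thesis unfolding LZ_def by (simp add: algebra_simps)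
    qed
    have "(\<integral>t. (if SX J t then fact (Suc n) / LZ J z t ^ Suc (Suc n) else 0) \<partial>PM J)
        = (\<integral>t. (fact (Suc n) / z 0 ^ Suc (Suc n)) * (if SX J t then (1 - (\<Sum>j\<in>J. t j)) ^ 0 else 0) \<partial>PM J)"
      by (rule Bochner_Integration.integral_cong) (auto simp: LZc)
    also have "\<dots> = (fact (Suc n) / z 0 ^ Suc (Suc n)) * (fact 0 / fact (card J + 0))"
      by (simp only: integral_mult_right_zero SX_vol[OF J])
    also have "\<dots> = 1 / z 0 ^ Suc (Suc n)" using Suc.prems(1) by simp
    finally have X: "(\<integral>t. (if SX J t then fact (Suc n) / LZ J z t ^ Suc (Suc n) else 0) \<partial>PM J) = 1 / z 0 ^ Suc (Suc n)" .
    have "(\<Prod>j\<in>J. z j) = (\<Prod>j\<in>J. z 0)" by (rule prod.cong) (auto simp: zc)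
    also have "\<dots> = z 0 ^ Suc n" using Suc.prems(1) by simp
    finally have "(\<Prod>j\<in>insert 0 J. z j) = z 0 ^ Suc (Suc n)" using J J0 by simp
    then show ?thesis unfolding X by simp
  qed
qed

lemma SX_recip:
  "finite J \<Longrightarrow> 0 \<notin> J \<Longrightarrow> (\<And>j. j \<in> insert 0 J \<Longrightarrow> 0 < z j) \<Longrightarrow>
   (\<integral>t. (if SX J t then fact (card J) / LZ J z t ^ Suc (card J) else 0) \<partial>PM J) = 1 / (\<Prod>j\<in>insert 0 J. z j)"
  using SX_recip_aux by blast


lemma Psi1_cont:
  fixes s :: real
  assumes c: "continuous_on {0..1} c" and s: "0 < s"
  shows "continuous_on {0..1} (\<lambda>x. c x / (1 - x + x * s) ^ q)"
proof -
  have nz: "\<forall>t\<in>{0..1}. (1 - t + t * s) ^ q \<noteq> 0"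
  proof
    fix t :: real assume "t \<in> {0..1}"
    then have "0 < 1 - t + t * s" using s by (intro lin_pos) auto
    then show "(1 - t + t * s) ^ q \<noteq> 0" by simp
  qed
  show ?thesis by (intro continuous_intros c nz)
qed

lemma integral_lebesgue_Icc01:
  fixes g :: "real \<Rightarrow> real"
  assumes "continuous_on {0..1} g"
  shows "integral {0..1} g = (\<integral>x. indicator {0..1} x * g x \<partial>lborel)"
  using set_borel_integral_eq_integral(2)[OF borel_integrable_atLeastAtMost'[OF assms]]
  by (simp add: set_lebesgue_integral_def)

lemma Psi1_lebesgue:
  fixes s :: real
  assumes c: "continuous_on {0..1} c" and s: "0 < s"
  shows "Psi1 c q s = (\<integral>x. indicator {0..1} x * (c x / (1 - x + x * s) ^ q) \<partial>lborel)"
  unfolding Psi1_def by (rule integral_lebesgue_Icc01[OF Psi1_cont[OF c s]])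

lemma LZ_affine:
  "1 - x + x * LZ J z t = LZ J (\<lambda>j. 1 - x + x * z j) t"
proof -
  have "(\<Sum>j\<in>J. t j * (1 - x + x * z j)) = (1 - x) * (\<Sum>j\<in>J. t j) + x * (\<Sum>j\<in>J. t j * z j)"
    by (simp add: algebra_simps sum.distrib sum_distrib_left sum_subtractf)
  then show ?thesis unfolding LZ_def by (simp add: algebra_simps)
qed

lemma affine_lower:
  fixes x L \<nu> :: real
  assumes "0 \<le> x" "x \<le> 1" "\<nu> \<le> 1" "\<nu> \<le> L"
  shows "\<nu> \<le> 1 - x + x * L"
proof -
  have "0 \<le> (1 - x) * (1 - \<nu>)" "0 \<le> x * (L - \<nu>)" using assms by auto
  then show ?thesis by (simp add: algebra_simps)
qed

lemma divdiff_Psi: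
  fixes f :: "real \<Rightarrow> real" and ys :: "real list"
  assumes ys: "\<And>y. y \<in> set ys \<Longrightarrow> 0 < y" and len: "length ys = Suc n"
    and f: "\<And>y. 0 < y \<Longrightarrow> (deriv ^^ n) f y = K * Psi1 (\<lambda>t. t ^ m) (Suc n) y"
  shows "divdiff ys f = K / fact n * integral {0..1} (\<lambda>x. x ^ m / (\<Prod>j\<in>{..n}. (1 - x + x * ys ! j)))"
proof -
  define J where "J = {1..n}"
  define z where "z = (\<lambda>j. ys ! j)"
  have J: "finite J" "0 \<notin> J" "card J = n" "insert 0 J = {..n}" unfolding J_def by auto
  have zpos: "\<And>j. j \<in> insert 0 J \<Longrightarrow> 0 < z j"
    unfolding J(4) z_def using ys len by (auto intro!: ys nth_mem)
  define \<mu> where "\<mu> = Min (z ` insert 0 J)"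
  have \<mu>: "0 < \<mu>" "\<And>j. j \<in> insert 0 J \<Longrightarrow> \<mu> \<le> z j"
    using J zpos unfolding \<mu>_def by auto
  have LZpos: "SX J t \<Longrightarrow> 0 < LZ J z t" for t
    using LZ_ge[of J t \<mu> z] \<mu> J by force
  define \<nu> where "\<nu> = min 1 \<mu>"
  have \<nu>: "0 < \<nu>" "\<nu> \<le> 1" "\<nu> \<le> \<mu>" using \<mu> unfolding \<nu>_def by auto
  define \<Phi> where "\<Phi> = (\<lambda>t x. if SX J t then indicator {0..1} x * (x ^ m / (1 - x + x * LZ J z t) ^ Suc n) else (0::real))"
  have cm: "continuous_on {0..1} (\<lambda>t::real. t ^ m)" by (intro continuous_intros)
  have "divdiff ys f = (\<integral>t. (if SX J t then (deriv ^^ n) f (LZ J z t) else 0) \<partial>PM J)"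
  proof -
    have n1: "length ys - 1 = n" using len by simp
    show ?thesis unfolding divdiff_def Let_def n1 SX_def LZ_def J_def z_def by simp
  qed
  also have "\<dots> = (\<integral>t. K * (\<integral>x. \<Phi> t x \<partial>lborel) \<partial>PM J)"
  proof (rule Bochner_Integration.integral_cong[OF refl])
    fix t assume "t \<in> space (PM J)"
    show "(if SX J t then (deriv ^^ n) f (LZ J z t) else 0) = K * (\<integral>x. \<Phi> t x \<partial>lborel)"
    proof (cases "SX J t")
      case True
      then show ?thesis
        unfolding \<Phi>_def using f[OF LZpos[OF True]] Psi1_lebesgue[OF cm LZpos[OF True]] by simp
    qed (simp add: \<Phi>_def)
  qed
  also have "\<dots> = K * (\<integral>t. (\<integral>x. \<Phi> t x \<partial>lborel) \<partial>PM J)"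
    by (rule integral_mult_right_zero)
  also have "(\<integral>t. (\<integral>x. \<Phi> t x \<partial>lborel) \<partial>PM J) = (\<integral>x. (\<integral>t. \<Phi> t x \<partial>PM J) \<partial>lborel)"
  proof -
    interpret FP: finite_product_sigma_finite "\<lambda>_. lborel :: real measure" J
      by standard (rule J(1))
    interpret P: pair_sigma_finite "PM J" "lborel :: real measure" ..
    have int: "integrable (PM J \<Otimes>\<^sub>M lborel) (case_prod \<Phi>)"
    proof (rule integrableI_bounded_set[where A = "Pi\<^sub>E J (\<lambda>_. {0..1}) \<times> {0..1}" and B = "1 / \<nu> ^ Suc n"])
      show "Pi\<^sub>E J (\<lambda>_. {0..1::real}) \<times> {0..1::real} \<in> sets (PM J \<Otimes>\<^sub>M lborel)"
        using J(1) by measurable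
      show "case_prod \<Phi> \<in> borel_measurable (PM J \<Otimes>\<^sub>M lborel)"
        unfolding \<Phi>_def case_prod_beta using J(1) by measurable
      have "emeasure (PM J \<Otimes>\<^sub>M lborel) (Pi\<^sub>E J (\<lambda>_. {0..1::real}) \<times> {0..1::real})
          = emeasure (PM J) (Pi\<^sub>E J (\<lambda>_. {0..1::real})) * emeasure lborel {0..1::real}"
        using J(1) by (intro lborel.emeasure_pair_measure_Times) measurable
      also have "emeasure (PM J) (Pi\<^sub>E J (\<lambda>_. {0..1::real})) = (\<Prod>i\<in>J. emeasure lborel {0..1::real})"
        using J(1) by (intro FP.emeasure_PiM) auto
      finally show "emeasure (PM J \<Otimes>\<^sub>M lborel) (Pi\<^sub>E J (\<lambda>_. {0..1::real}) \<times> {0..1::real}) < \<infinity>"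
        by simp
      show "AE p in PM J \<Otimes>\<^sub>M lborel. p \<in> Pi\<^sub>E J (\<lambda>_. {0..1}) \<times> {0..1} \<longrightarrow> norm (case_prod \<Phi> p) \<le> 1 / \<nu> ^ Suc n"
      proof (intro AE_I2 impI)
        fix p :: "(nat \<Rightarrow> real) \<times> real"
        obtain t x where p: "p = (t, x)" by (cases p)
        show "norm (case_prod \<Phi> p) \<le> 1 / \<nu> ^ Suc n"
        proof (cases "SX J t \<and> x \<in> {0..1}")
          case True
          then have x: "0 \<le> x" "x \<le> 1" and S: "SX J t" by auto
          have "\<mu> \<le> LZ J z t" using LZ_ge[OF S J(1) \<mu>(2)] .
          then have low: "\<nu> \<le> 1 - x + x * LZ J z t" using \<nu> x by (intro affine_lower) auto
          have "\<bar>x ^ m / (1 - x + x * LZ J z t) ^ Suc n\<bar> \<le> \<bar>x ^ m\<bar> / \<nu> ^ Suc n"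
            by (rule recip_bound[OF \<nu>(1) low])
          also have "\<dots> \<le> 1 / \<nu> ^ Suc n"
            using x \<nu> by (intro divide_right_mono) (auto simp: power_le_one)
          finally show ?thesis using True unfolding p \<Phi>_def by simp
        next
          case False
          have "0 \<le> 1 / \<nu> ^ Suc n" using \<nu> by simp
          then show ?thesis using False unfolding p \<Phi>_def by (auto simp: indicator_def)
        qed
      qed
      show "AE p in PM J \<Otimes>\<^sub>M lborel. p \<notin> Pi\<^sub>E J (\<lambda>_. {0..1}) \<times> {0..1} \<longrightarrow> case_prod \<Phi> p = 0"
      proof (intro AE_I2 impI)
        fix p :: "(nat \<Rightarrow> real) \<times> real"
        assume sp: "p \<in> space (PM J \<Otimes>\<^sub>M lborel)" and np: "p \<notin> Pi\<^sub>E J (\<lambda>_. {0..1}) \<times> {0..1}"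
        obtain t x where p: "p = (t, x)" by (cases p)
        have t: "t \<in> space (PM J)" using sp p by (simp add: space_pair_measure)
        show "case_prod \<Phi> p = 0"
        proof (cases "SX J t \<and> x \<in> {0..1}")
          case True
          then have "\<forall>j\<in>J. t j \<in> {0..1}" using SX_le1[of J t] J(1) by (auto simp: SX_def)
          then have "t \<in> Pi\<^sub>E J (\<lambda>_. {0..1})" using t by (auto simp: space_PiM PiE_iff)
          then show ?thesis using np True p by auto
        qed (auto simp: p \<Phi>_def indicator_def)
      qed
    qed
    show ?thesis by (rule P.Fubini_integral[OF int, symmetric])
  qed
  also have "(\<integral>x. (\<integral>t. \<Phi> t x \<partial>PM J) \<partial>lborel)
      = (\<integral>x. indicator {0..1} x * (x ^ m / fact n / (\<Prod>j\<in>{..n}. (1 - x + x * ys ! j))) \<partial>lborel)"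
  proof (rule Bochner_Integration.integral_cong[OF refl])
    fix x :: real assume "x \<in> space lborel"
    show "(\<integral>t. \<Phi> t x \<partial>PM J) = indicator {0..1} x * (x ^ m / fact n / (\<Prod>j\<in>{..n}. (1 - x + x * ys ! j)))"
    proof (cases "x \<in> {0..1}")
      case True
      define zx where "zx = (\<lambda>j. 1 - x + x * z j)"
      have zxpos: "\<And>j. j \<in> insert 0 J \<Longrightarrow> 0 < zx j"
        unfolding zx_def using True zpos by (intro lin_pos) auto
      have "(\<integral>t. \<Phi> t x \<partial>PM J) = (\<integral>t. (x ^ m / fact n) * (if SX J t then fact (card J) / LZ J zx t ^ Suc (card J) else 0) \<partial>PM J)"
        by (rule Bochner_Integration.integral_cong[OF refl])
           (use True J(3) in \<open>simp add: \<Phi>_def zx_def LZ_affine\<close>)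
      also have "\<dots> = (x ^ m / fact n) * (1 / (\<Prod>j\<in>insert 0 J. zx j))"
        by (simp only: integral_mult_right_zero SX_recip[OF J(1,2) zxpos])
      also have "\<dots> = indicator {0..1} x * (x ^ m / fact n / (\<Prod>j\<in>{..n}. (1 - x + x * ys ! j)))"
        using True unfolding J(4) zx_def z_def by simp
      finally show ?thesis .
    next
      case False
      then have "\<Phi> t x = 0" for t unfolding \<Phi>_def by (simp add: indicator_def)
      then show ?thesis using False by simp
    qed
  qed
  also have "\<dots> = integral {0..1} (\<lambda>x. x ^ m / fact n / (\<Prod>j\<in>{..n}. (1 - x + x * ys ! j)))"
  proof (rule integral_lebesgue_Icc01[symmetric])
    have nz: "\<forall>x\<in>{0..1}. (\<Prod>j\<in>{..n}. (1 - x + x * ys ! j)) \<noteq> 0"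
    proof
      fix x :: real assume x: "x \<in> {0..1}"
      have "0 < (\<Prod>j\<in>{..n}. (1 - x + x * ys ! j))"
        using zpos x unfolding J(4) z_def by (intro prod_pos ballI lin_pos) auto
      then show "(\<Prod>j\<in>{..n}. (1 - x + x * ys ! j)) \<noteq> 0" by (rule not_sym[OF less_imp_neq])
    qed
    show "continuous_on {0..1} (\<lambda>x. x ^ m / fact n / (\<Prod>j\<in>{..n}. (1 - x + x * ys ! j)))"
      by (intro continuous_intros nz) simp
  qed
  also have "\<dots> = (1 / fact n) * integral {0..1} (\<lambda>x. x ^ m / (\<Prod>j\<in>{..n}. (1 - x + x * ys ! j)))"
    by (simp add: integral_mult_right[symmetric])
  finally show ?thesis by simp
qed


lemma subst_alg:
  fixes t u Da Db :: real
  assumes "0 < u" "0 < Da" "0 < Db"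
  shows "(t / u) ^ (a0 + a1 + a2 + 1) / ((1 / u) ^ (a0 + 1) * (Da / u) ^ (a1 + 1) * (Db / u) ^ (a2 + 1)) * (1 / u ^ 2)
       = t ^ (a0 + a1 + a2 + 1) / (Da ^ (a1 + 1) * Db ^ (a2 + 1))"
  using assms by (simp add: power_divide field_simps power_add power2_eq_square)

lemma frakH_eq:
  fixes a b :: real
  assumes a: "0 < a" and b: "0 < b"
  shows "frakH a0 a1 a2 a b = integral {0..1} (\<lambda>t. t ^ (a0 + a1 + a2 + 1) / ((1 - t + t * a) ^ (a1 + 1) * (1 - t + t * b) ^ (a2 + 1)))"
proof -
  define N where "N = a0 + a1 + a2"
  define h where "h = (\<lambda>x::real. x ^ (N + 1) / ((1 + x) ^ (a0 + 1) * (1 + a * x) ^ (a1 + 1) * (1 + b * x) ^ (a2 + 1)))"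
  define P where "P = (\<lambda>t::real. t ^ (N + 1) / ((1 - t + t * a) ^ (a1 + 1) * (1 - t + t * b) ^ (a2 + 1)))"
  define g where "g = (\<lambda>t::real. t / (1 - t))"
  define g' where "g' = (\<lambda>t::real. 1 / (1 - t) ^ 2)"
  have hpos: "0 < (1 + y) ^ (a0 + 1) * (1 + a * y) ^ (a1 + 1) * (1 + b * y) ^ (a2 + 1)" if y: "0 < y" for y
  proof -
    have "0 < a * y" "0 < b * y" using a b y by auto
    then show ?thesis using y by (intro mult_pos_pos zero_less_power) auto
  qed
  have Pcont: "continuous_on {0..1} P"
  proof -
    have nz: "\<forall>t\<in>{0..1}. (1 - t + t * a) ^ (a1 + 1) * (1 - t + t * b) ^ (a2 + 1) \<noteq> 0"
    proof
      fix t :: real assume "t \<in> {0..1}"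
      then have "0 < 1 - t + t * a" "0 < 1 - t + t * b" using a b by (auto intro: lin_pos)
      then show "(1 - t + t * a) ^ (a1 + 1) * (1 - t + t * b) ^ (a2 + 1) \<noteq> 0" by simp
    qed
    show ?thesis unfolding P_def by (intro continuous_intros nz)
  qed
  have hgP: "h (g t) * g' t = P t" if t: "0 < t" "t < 1" for t
  proof -
    have u: "0 < 1 - t" using t by simp
    have Da: "0 < 1 - t + t * a" "0 < 1 - t + t * b" using t a b by (auto intro: lin_pos)
    have e1: "1 + t / (1 - t) = 1 / (1 - t)" using u by (simp add: field_simps)
    have e2: "1 + a * (t / (1 - t)) = (1 - t + t * a) / (1 - t)" using u by (simp add: field_simps)
    have e3: "1 + b * (t / (1 - t)) = (1 - t + t * b) / (1 - t)" using u by (simp add: field_simps)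
    show ?thesis unfolding h_def g_def g'_def P_def e1 e2 e3 N_def
      by (rule subst_alg[OF u Da])
  qed
  have sub: "(LBINT x=ereal 0..\<infinity>. h x) = (LBINT x=ereal 0..ereal 1. h (g x) * g' x)"
  proof (rule interval_integral_substitution_nonneg(2))
    show "ereal 0 < ereal 1" by simp
    fix x assume x: "ereal 0 < ereal x" "ereal x < ereal 1"
    then have x': "0 < x" "x < 1" by auto
    have "((\<lambda>t. t / (1 - t)) has_real_derivative (1 * (1 - x) - (-1) * x) / (1 - x) ^ Suc (Suc 0)) (at x)"
      by (rule DERIV_quotient) (use x' in \<open>auto intro!: derivative_eq_intros\<close>)
    then show "DERIV g x :> g' x" unfolding g_def g'_def by (simp add: power2_eq_square)
    have gx: "0 < g x" unfolding g_def using x' by simp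
    show "isCont h (g x)" unfolding h_def using hpos[of "g x", OF gx]
      by (intro continuous_intros) auto
    show "isCont g' x" unfolding g'_def using x' by (intro continuous_intros) auto
    show "0 \<le> h (g x)" unfolding h_def using hpos[of "g x", OF gx] gx by simp
  next
    fix x show "0 \<le> g' x" unfolding g'_def by simp
  next
    show "((ereal \<circ> g \<circ> real_of_ereal) \<longlongrightarrow> ereal 0) (at_right (ereal 0))"
      unfolding g_def by (auto simp: ereal_tendsto_simps intro!: tendsto_eq_intros)
    show "((ereal \<circ> g \<circ> real_of_ereal) \<longlongrightarrow> \<infinity>) (at_left (ereal 1))"
      unfolding g_def ereal_tendsto_simps by real_asymp
    have "set_integrable lborel (einterval (ereal 0) (ereal 1)) P"
      by (rule set_integrable_subset[OF borel_integrable_atLeastAtMost'[OF Pcont]]) auto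
    then show "set_integrable lborel (einterval (ereal 0) (ereal 1)) (\<lambda>x. h (g x) * g' x)"
      by (rule iffD1[OF set_integrable_cong, rotated 3]) (auto simp: hgP)
  qed
  have "frakH a0 a1 a2 a b = (LBINT x=ereal 0..\<infinity>. h x)"
    unfolding frakH_def h_def N_def by (simp add: interval_lebesgue_integral_def)
  also note sub
  also have "(LBINT x=ereal 0..ereal 1. h (g x) * g' x) = (LBINT x=ereal 0..ereal 1. P x)"
    by (rule interval_integral_cong) (auto simp: hgP)
  also have "\<dots> = integral {0..1} P"
    by (rule interval_integral_eq_integral) (auto intro: borel_integrable_atLeastAtMost'[OF Pcont])
  finally show ?thesis unfolding P_def N_def .
qed


lemma Psi1_one_two: fixes y :: real assumes y: "0 < y" shows "Psi1 (\<lambda>_. 1) 2 y = 1 / y"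
proof -
  have "((\<lambda>t. 1 / (1 - t + t * y) ^ 2) has_integral (1 / (1 - 1 + 1 * y) - 0 / (1 - 0 + 0 * y))) {0..1}"
  proof (rule fundamental_theorem_of_calculus)
    fix t :: real assume t: "t \<in> {0..1}"
    have p: "0 < 1 - t + t * y" using t y lin_pos by auto
    have dD: "((\<lambda>t. 1 - t + t * y) has_real_derivative (y - 1)) (at t within {0..1})"
      by (rule derivative_eq_intros refl | simp)+
    have "((\<lambda>t. t / (1 - t + t * y)) has_real_derivative (1 * (1 - t + t * y) - (y - 1) * t) / (1 - t + t * y) ^ Suc (Suc 0)) (at t within {0..1})"
      by (rule DERIV_quotient[OF DERIV_ident dD]) (use p in simp)
    moreover have "(1 * (1 - t + t * y) - (y - 1) * t) / (1 - t + t * y) ^ Suc (Suc 0) = 1 / (1 - t + t * y) ^ 2"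
      by (simp add: algebra_simps power2_eq_square)
    ultimately show "((\<lambda>t. t / (1 - t + t * y)) has_vector_derivative 1 / (1 - t + t * y) ^ 2) (at t within {0..1})"
      by (simp add: has_real_derivative_iff_has_vector_derivative)
  qed simp
  then show ?thesis unfolding Psi1_def by (simp add: integral_unique)
qed

lemma Psi1_one_one: fixes y :: real assumes y: "0 < y" shows "Psi1 (\<lambda>_. 1) 1 y = L0 y"
proof (cases "y = 1")
  case True then show ?thesis by (simp add: Psi1_def L0_def)
next
  case False
  have "((\<lambda>t. 1 / (1 - t + t * y) ^ 1) has_integral (ln (1 - 1 + 1 * y) / (y - 1) - ln (1 - 0 + 0 * y) / (y - 1))) {0..1}"
  proof (rule fundamental_theorem_of_calculus)
    fix t :: real assume t: "t \<in> {0..1}"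
    have p: "0 < 1 - t + t * y" using t y lin_pos by auto
    have dD: "((\<lambda>t. 1 - t + t * y) has_real_derivative (y - 1)) (at t within {0..1})"
      by (rule derivative_eq_intros refl | simp)+
    have "((\<lambda>t. ln (1 - t + t * y)) has_real_derivative (1 / (1 - t + t * y)) * (y - 1)) (at t within {0..1})"
      by (rule DERIV_chain2[OF DERIV_ln_divide[OF p] dD])
    then have "((\<lambda>t. ln (1 - t + t * y) / (y - 1)) has_real_derivative (1 / (1 - t + t * y)) * (y - 1) / (y - 1)) (at t within {0..1})"
      by (rule DERIV_cdivide)
    moreover have "(1 / (1 - t + t * y)) * (y - 1) / (y - 1) = 1 / (1 - t + t * y) ^ 1"
      using False by simp
    ultimately show "((\<lambda>t. ln (1 - t + t * y) / (y - 1)) has_vector_derivative 1 / (1 - t + t * y) ^ 1) (at t within {0..1})"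
      by (simp add: has_real_derivative_iff_has_vector_derivative)
  qed simp
  then show ?thesis unfolding Psi1_def L0_def using False by (simp add: integral_unique)
qed


lemma prod_nth_list: "(\<Prod>j<length xs. g (xs ! j)) = prod_list (map g xs)"
  by (induction xs) (simp_all add: prod.lessThan_Suc_shift del: prod.lessThan_Suc)

lemma ln_derivs:
  fixes y :: real
  assumes y: "0 < y"
  shows "(deriv ^^ Suc k) ln y = (-1) ^ k * fact (Suc k) * Psi1 (\<lambda>t. t ^ k) (Suc (Suc k)) y"
proof -
  have e: "(deriv ^^ Suc k) ln = (deriv ^^ k) (deriv ln)" by (simp only: funpow_Suc_right o_def)
  have dl: "deriv ln z = Psi1 (\<lambda>_. 1) 2 z" if "z \<in> {0<..}" for z :: real
    using DERIV_imp_deriv[OF DERIV_ln_divide, of z] Psi1_one_two[of z] that by simp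
  have "(deriv ^^ k) (deriv ln) y = (-1) ^ k * pochhammer (real 2) k * Psi1 (\<lambda>t. t ^ k * 1) (2 + k) y"
    by (rule Psi1_funpow_local[of "{0<..}"]) (use dl y in auto)
  moreover have "pochhammer (real 2) k = fact (Suc k)"
    by (simp add: pochhammer_fact pochhammer_rec)
  ultimately show ?thesis unfolding e by simp
qed

lemma L0_derivs:
  fixes y :: real
  assumes y: "0 < y"
  shows "(deriv ^^ k) L0 y = (-1) ^ k * fact k * Psi1 (\<lambda>t. t ^ k) (Suc k) y"
proof -
  have "(deriv ^^ k) L0 y = (-1) ^ k * pochhammer (real 1) k * Psi1 (\<lambda>t. t ^ k * 1) (1 + k) y"
    by (rule Psi1_funpow_local[of "{0<..}"]) (use Psi1_one_one y in auto)
  then show ?thesis by (simp add: pochhammer_fact)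
qed

lemma prod_aff:
  fixes x :: real and ys :: "real list"
  assumes "length ys = Suc n"
  shows "(\<Prod>j\<in>{..n}. (1 - x + x * ys ! j)) = prod_list (map (\<lambda>y. 1 - x + x * y) ys)"
proof -
  define g where "g = (\<lambda>y::real. 1 - x + x * y)"
  have e: "{..n} = {..<length ys}" using assms by auto
  have "(\<Prod>j\<in>{..n}. (1 - x + x * ys ! j)) = (\<Prod>j\<in>{..n}. g (ys ! j))" unfolding g_def ..
  also have "\<dots> = (\<Prod>j<length ys. g (ys ! j))" by (simp only: e)
  also have "\<dots> = prod_list (map g ys)" by (rule prod_nth_list)
  finally show ?thesis unfolding g_def .
qed

lemma prod_rep3:
  fixes x a b :: real
  assumes "k + l + q = Suc n"
  shows "(\<Prod>j\<in>{..n}. (1 - x + x * (replicate k 1 @ replicate l a @ replicate q b) ! j))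
       = (1 - x + x * a) ^ l * (1 - x + x * b) ^ q"
  using assms by (subst prod_aff) auto

lemma dd3_ln:
  fixes a b :: real
  assumes a: "0 < a" and b: "0 < b"
  shows "dd3 (a0 + 1) a (a1 + 1) b (a2 + 1) ln = (-1) ^ (a0 + a1 + a2 + 1) *
     integral {0..1} (\<lambda>t. t ^ (a0 + a1 + a2 + 1) / ((1 - t + t * a) ^ (a1 + 1) * (1 - t + t * b) ^ (a2 + 1)))"
proof -
  define N where "N = a0 + a1 + a2"
  define ys where "ys = replicate (a0 + 1) 1 @ replicate (a1 + 1) a @ replicate (a2 + 1) b"
  have ys: "\<And>y. y \<in> set ys \<Longrightarrow> 0 < y" "length ys = Suc (Suc (Suc N))"
    unfolding ys_def N_def using a b by auto
  have "divdiff ys ln = ((-1) ^ Suc N * fact (Suc (Suc N))) / fact (Suc (Suc N)) *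
      integral {0..1} (\<lambda>x. x ^ Suc N / (\<Prod>j\<in>{..Suc (Suc N)}. (1 - x + x * ys ! j)))"
    by (rule divdiff_Psi[OF ys(1) ys(2) ln_derivs])
  also have "(\<lambda>x. x ^ Suc N / (\<Prod>j\<in>{..Suc (Suc N)}. (1 - x + x * ys ! j)))
      = (\<lambda>x. x ^ (a0 + a1 + a2 + 1) / ((1 - x + x * a) ^ (a1 + 1) * (1 - x + x * b) ^ (a2 + 1)))"
    unfolding ys_def by (subst prod_rep3) (auto simp: N_def)
  finally show ?thesis unfolding dd3_def ys_def[symmetric] N_def by simp
qed

lemma dd3_L0:
  fixes a b :: real
  assumes a: "0 < a" and b: "0 < b"
  shows "dd3 a0 a (a1 + 1) b (a2 + 1) L0 = (-1) ^ (a0 + a1 + a2 + 1) *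
     integral {0..1} (\<lambda>t. t ^ (a0 + a1 + a2 + 1) / ((1 - t + t * a) ^ (a1 + 1) * (1 - t + t * b) ^ (a2 + 1)))"
proof -
  define N where "N = a0 + a1 + a2"
  define ys where "ys = replicate a0 1 @ replicate (a1 + 1) a @ replicate (a2 + 1) b"
  have ys: "\<And>y. y \<in> set ys \<Longrightarrow> 0 < y" "length ys = Suc (Suc N)"
    unfolding ys_def N_def using a b by auto
  have "divdiff ys L0 = ((-1) ^ Suc N * fact (Suc N)) / fact (Suc N) *
      integral {0..1} (\<lambda>x. x ^ Suc N / (\<Prod>j\<in>{..Suc N}. (1 - x + x * ys ! j)))"
    by (rule divdiff_Psi[OF ys(1) ys(2) L0_derivs])
  also have "(\<lambda>x. x ^ Suc N / (\<Prod>j\<in>{..Suc N}. (1 - x + x * ys ! j)))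
      = (\<lambda>x. x ^ (a0 + a1 + a2 + 1) / ((1 - x + x * a) ^ (a1 + 1) * (1 - x + x * b) ^ (a2 + 1)))"
    unfolding ys_def by (subst prod_rep3) (auto simp: N_def)
  finally show ?thesis unfolding dd3_def ys_def[symmetric] N_def by simp
qed

lemma Lmod_Psi:
  fixes s :: real
  assumes s: "0 < s"
  shows "Lmod r s = Psi1 (\<lambda>t. t ^ r) 1 s"
proof (cases r)
  case 0
  then show ?thesis using Psi1_one_one[OF s] by (simp add: Lmod_def)
next
  case (Suc r')
  define ys where "ys = replicate (r + 1) 1 @ [s]"
  have ys: "\<And>y. y \<in> set ys \<Longrightarrow> 0 < y" "length ys = Suc (Suc r)"
    unfolding ys_def using s by auto
  have "divdiff ys ln = ((-1) ^ r * fact (Suc r)) / fact (Suc r) *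
      integral {0..1} (\<lambda>x. x ^ r / (\<Prod>j\<in>{..Suc r}. (1 - x + x * ys ! j)))"
    by (rule divdiff_Psi[OF ys(1) ys(2) ln_derivs])
  also have "(\<lambda>x. x ^ r / (\<Prod>j\<in>{..Suc r}. (1 - x + x * ys ! j))) = (\<lambda>x. x ^ r / (1 - x + x * s) ^ 1)"
    using ys(2) unfolding ys_def by (subst prod_aff) auto
  finally have "divdiff ys ln = (-1) ^ r * Psi1 (\<lambda>t. t ^ r) 1 s" unfolding Psi1_def by simp
  then show ?thesis unfolding Lmod_def ys_def using Suc by simp
qed


lemma final_alg:
  fixes t Da Db f1 f2 :: real
  assumes "Da \<noteq> 0" "Db \<noteq> 0" "f1 \<noteq> 0" "f2 \<noteq> 0"
  shows "(-1) ^ (a0 + a1 + a2 + a0 + 1) / (f1 * f2) * ((-1) ^ a1 * f1 * (t ^ a1 * ((-1) ^ a2 * f2 * (- (t ^ (a2 + Suc a0) / Db ^ (1 + a2)))) / Da ^ (1 + a1)))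
       = t ^ (a0 + a1 + a2 + 1) / (Da ^ (a1 + 1) * Db ^ (a2 + 1))"
proof -
  define E where "E = a0 + a1 + a2 + a0 + 1"
  have sg: "(-1::real) ^ E * (-1) ^ a1 * (-1) ^ a2 = -1"
  proof -
    have "(-1::real) ^ E * (-1) ^ a1 * (-1) ^ a2 = (-1) ^ (E + a1 + a2)" by (simp add: power_add)
    also have "E + a1 + a2 = 2 * (a0 + a1 + a2) + 1" unfolding E_def by simp
    also have "(-1::real) ^ (2 * (a0 + a1 + a2) + 1) = -1" by (simp only: power_add power_mult) simp
    finally show ?thesis .
  qed
  have ex: "a1 + (a2 + Suc a0) = a0 + a1 + a2 + 1" by simp
  have tp: "t ^ a1 * t ^ (a2 + Suc a0) = t ^ (a0 + a1 + a2 + 1)"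
    by (simp only: power_add[symmetric] ex)
  have "(-1) ^ E / (f1 * f2) * ((-1) ^ a1 * f1 * (t ^ a1 * ((-1) ^ a2 * f2 * (- (t ^ (a2 + Suc a0) / Db ^ (1 + a2)))) / Da ^ (1 + a1)))
      = ((-1) ^ E * (-1) ^ a1 * (-1) ^ a2) * (-1) * (t ^ a1 * t ^ (a2 + Suc a0)) / (Da ^ (a1 + 1) * Db ^ (a2 + 1))"
    using assms by (simp add: field_simps)
  also have "\<dots> = t ^ (a0 + a1 + a2 + 1) / (Da ^ (a1 + 1) * Db ^ (a2 + 1))"
    unfolding sg tp by simp
  finally show ?thesis unfolding E_def .
qed


lemma q_alg:
  fixes Da d t :: real
  assumes "Da \<noteq> 0" "Da + t * d \<noteq> 0"
  shows "t ^ r / (Da + t * d) ^ 1 - t ^ r / Da ^ 1 = d * (- (t ^ Suc r / Da) / (Da + t * d) ^ 1)"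
  using assms by (simp add: field_simps)

lemma Q_Psi:
  fixes a' b' :: real
  assumes a': "0 < a'" and b': "0 < b'" and ne: "a' \<noteq> b'"
  shows "(Lmod r b' - Lmod r a') / (b' - a') = Psi1 (\<lambda>t. - (t ^ Suc r / (1 - t + t * a'))) 1 b'"
proof -
  have cr: "continuous_on {0..1} (\<lambda>t::real. t ^ r)" by (intro continuous_intros)
  have "Lmod r b' - Lmod r a' = integral {0..1} (\<lambda>t. t ^ r / (1 - t + t * b') ^ 1 - t ^ r / (1 - t + t * a') ^ 1)"
    unfolding Lmod_Psi[OF b'] Lmod_Psi[OF a'] Psi1_def
    by (rule integral_diff[symmetric, OF Psi1_integrable[OF cr b'] Psi1_integrable[OF cr a']])
  also have "\<dots> = integral {0..1} (\<lambda>t. (b' - a') * (- (t ^ Suc r / (1 - t + t * a')) / (1 - t + t * b') ^ 1))"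
  proof (rule integral_cong)
    fix t :: real assume t: "t \<in> {0..1}"
    have p: "0 < 1 - t + t * a'" "0 < 1 - t + t * b'" using t a' b' by (auto intro: lin_pos)
    show "t ^ r / (1 - t + t * b') ^ 1 - t ^ r / (1 - t + t * a') ^ 1 =
        (b' - a') * (- (t ^ Suc r / (1 - t + t * a')) / (1 - t + t * b') ^ 1)"
    proof -
      have e: "1 - t + t * b' = (1 - t + t * a') + t * (b' - a')" by (simp add: algebra_simps)
      show ?thesis unfolding e by (rule q_alg) (use p e in auto)
    qed
  qed
  also have "\<dots> = (b' - a') * Psi1 (\<lambda>t. - (t ^ Suc r / (1 - t + t * a'))) 1 b'"
    unfolding Psi1_def by (rule integral_mult_right)
  finally show ?thesis using ne by simp
qed

theorem mainTheorem16:
  fixes a0 a1 a2 :: nat and a b :: real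
  assumes "a > 0" and "b > 0" and "a \<noteq> b"
  shows "frakH a0 a1 a2 a b = (-1) ^ (a0 + a1 + a2 + 1) * dd3 (a0 + 1) a (a1 + 1) b (a2 + 1) ln
       \<and> frakH a0 a1 a2 a b = (-1) ^ (a0 + a1 + a2 + 1) * dd3 a0 a (a1 + 1) b (a2 + 1) L0
       \<and> frakH a0 a1 a2 a b = (-1) ^ (a0 + a1 + a2 + a0 + 1) / (fact a1 * fact a2) *
            (deriv ^^ a1) (\<lambda>a'. (deriv ^^ a2) (\<lambda>b'. (Lmod a0 b' - Lmod a0 a') / (b' - a')) b) a
       \<and> frakH a0 0 0 a b = - ((Lmod a0 b - Lmod a0 a) / (b - a))"
proof -
  have a: "0 < a" and b: "0 < b" and ab: "a \<noteq> b" using assms by auto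
  define I where "I = integral {0..1} (\<lambda>t. t ^ (a0 + a1 + a2 + 1) / ((1 - t + t * a) ^ (a1 + 1) * (1 - t + t * b) ^ (a2 + 1)))"
  have H: "frakH a0 a1 a2 a b = I" unfolding I_def by (rule frakH_eq[OF a b])
  have sq: "(-1::real) ^ (a0 + a1 + a2 + 1) * (-1) ^ (a0 + a1 + a2 + 1) = 1"
    by (simp add: power_mult_distrib[symmetric])
  have c1: "frakH a0 a1 a2 a b = (-1) ^ (a0 + a1 + a2 + 1) * dd3 (a0 + 1) a (a1 + 1) b (a2 + 1) ln"
    unfolding dd3_ln[OF a b] H I_def[symmetric] mult.assoc[symmetric] sq by simp
  have c2: "frakH a0 a1 a2 a b = (-1) ^ (a0 + a1 + a2 + 1) * dd3 a0 a (a1 + 1) b (a2 + 1) L0"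
    unfolding dd3_L0[OF a b] H I_def[symmetric] mult.assoc[symmetric] sq by simp
  define ca where "ca = (\<lambda>a' t::real. - (t ^ Suc a0 / (1 - t + t * a')))"
  have cac: "continuous_on {0..1} (ca a')" if "0 < a'" for a' :: real
  proof -
    have nz: "\<forall>t\<in>{0..1}. 1 - t + t * a' \<noteq> 0" using that lin_pos by force
    show ?thesis unfolding ca_def by (intro continuous_intros nz)
  qed
  define cb where "cb = (\<lambda>t::real. (-1) ^ a2 * fact a2 * (- (t ^ (a2 + Suc a0) / (1 - t + t * b) ^ (1 + a2))))"
  have cbc: "continuous_on {0..1} cb"
  proof -
    have nz: "\<forall>t\<in>{0..1}. (1 - t + t * b) ^ (1 + a2) \<noteq> 0"
    proof
      fix t :: real assume "t \<in> {0..1}"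
      then have "0 < 1 - t + t * b" using b by (intro lin_pos) auto
      then show "(1 - t + t * b) ^ (1 + a2) \<noteq> 0" by simp
    qed
    show ?thesis unfolding cb_def by (intro continuous_intros nz)
  qed
  define V where "V = {0<..} - {b}"
  have V: "open V" "V \<subseteq> {0<..}" "a \<in> V" unfolding V_def using a ab by auto
  have inner: "(deriv ^^ a2) (\<lambda>b'. (Lmod a0 b' - Lmod a0 a') / (b' - a')) b = Psi1 cb 1 a'"
    if a'V: "a' \<in> V" for a'
  proof -
    have a': "0 < a'" "a' \<noteq> b" using a'V unfolding V_def by auto
    have "(deriv ^^ a2) (\<lambda>b'. (Lmod a0 b' - Lmod a0 a') / (b' - a')) b
        = (-1) ^ a2 * pochhammer (real 1) a2 * Psi1 (\<lambda>t. t ^ a2 * ca a' t) (1 + a2) b"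
    proof (rule Psi1_funpow_local[of "{0<..} - {a'}"])
      show "open ({0<..} - {a'::real})" by auto
      show "y \<in> {0<..} - {a'} \<Longrightarrow> (Lmod a0 y - Lmod a0 a') / (y - a') = Psi1 (ca a') 1 y" for y
        unfolding ca_def using Q_Psi[of a' y a0] a' by auto
      show "b \<in> {0<..} - {a'}" using b a' by auto
      show "continuous_on {0..1} (ca a')" by (rule cac[OF a'(1)])
    qed auto
    also have "\<dots> = Psi1 cb 1 a'"
    proof -
      have "(-1) ^ a2 * pochhammer (real 1) a2 * Psi1 (\<lambda>t. t ^ a2 * ca a' t) (1 + a2) b
          = integral {0..1} (\<lambda>t. (-1) ^ a2 * fact a2 * (t ^ a2 * ca a' t / (1 - t + t * b) ^ (1 + a2)))"
        unfolding Psi1_def by (simp only: integral_mult_right of_nat_1 pochhammer_fact[symmetric])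
      also have "\<dots> = integral {0..1} (\<lambda>t. cb t / (1 - t + t * a') ^ 1)"
      proof (rule integral_cong)
        fix t :: real assume t: "t \<in> {0..1}"
        have p: "0 < 1 - t + t * a'" "0 < 1 - t + t * b" using t a' b by (auto intro: lin_pos)
        show "(-1) ^ a2 * fact a2 * (t ^ a2 * ca a' t / (1 - t + t * b) ^ (1 + a2)) = cb t / (1 - t + t * a') ^ 1"
          unfolding ca_def cb_def using p by (simp add: field_simps power_add)
      qed
      finally show ?thesis unfolding Psi1_def .
    qed
    finally show ?thesis .
  qed
  have outer: "(deriv ^^ a1) (\<lambda>a'. (deriv ^^ a2) (\<lambda>b'. (Lmod a0 b' - Lmod a0 a') / (b' - a')) b) a
      = (-1) ^ a1 * pochhammer (real 1) a1 * Psi1 (\<lambda>t. t ^ a1 * cb t) (1 + a1) a"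
    by (rule Psi1_funpow_local[OF V(1,2) inner V(3) cbc])
  have c3: "frakH a0 a1 a2 a b = (-1) ^ (a0 + a1 + a2 + a0 + 1) / (fact a1 * fact a2) *
            (deriv ^^ a1) (\<lambda>a'. (deriv ^^ a2) (\<lambda>b'. (Lmod a0 b' - Lmod a0 a') / (b' - a')) b) a"
  proof -
    have "(-1) ^ (a0 + a1 + a2 + a0 + 1) / (fact a1 * fact a2) *
            ((-1) ^ a1 * pochhammer (real 1) a1 * Psi1 (\<lambda>t. t ^ a1 * cb t) (1 + a1) a)
        = integral {0..1} (\<lambda>t. (-1) ^ (a0 + a1 + a2 + a0 + 1) / (fact a1 * fact a2) *
            ((-1) ^ a1 * fact a1 * (t ^ a1 * cb t / (1 - t + t * a) ^ (1 + a1))))"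
      unfolding Psi1_def by (simp only: integral_mult_right of_nat_1 pochhammer_fact[symmetric])
    also have "\<dots> = I" unfolding I_def
    proof (rule integral_cong)
      fix t :: real assume t: "t \<in> {0..1}"
      have p: "0 < 1 - t + t * a" "0 < 1 - t + t * b" using t a b by (auto intro: lin_pos)
      show "(-1) ^ (a0 + a1 + a2 + a0 + 1) / (fact a1 * fact a2) *
            ((-1) ^ a1 * fact a1 * (t ^ a1 * cb t / (1 - t + t * a) ^ (1 + a1)))
          = t ^ (a0 + a1 + a2 + 1) / ((1 - t + t * a) ^ (a1 + 1) * (1 - t + t * b) ^ (a2 + 1))"
        unfolding cb_def by (rule final_alg) (use p in auto)
    qed
    finally show ?thesis unfolding outer H by simp
  qed
  have c4: "frakH a0 0 0 a b = - ((Lmod a0 b - Lmod a0 a) / (b - a))"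
  proof -
    have "frakH a0 0 0 a b = integral {0..1} (\<lambda>t. t ^ (a0 + 0 + 0 + 1) / ((1 - t + t * a) ^ (0 + 1) * (1 - t + t * b) ^ (0 + 1)))"
      by (rule frakH_eq[OF a b])
    also have "\<dots> = - Psi1 (\<lambda>t. - (t ^ Suc a0 / (1 - t + t * a))) 1 b"
      unfolding Psi1_def integral_neg[symmetric] by (rule integral_cong) simp
    also have "Psi1 (\<lambda>t. - (t ^ Suc a0 / (1 - t + t * a))) 1 b = (Lmod a0 b - Lmod a0 a) / (b - a)"
      by (rule Q_Psi[symmetric]) (use a b ab in auto)
    finally show ?thesis .
  qed
  show ?thesis using c1 c2 c3 c4 by blast
qed


end
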